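(* Let $G$ be a finite connected weighted graph with $N$ vertices and let $\lambda_{N-1}$ be the largest eigenvalue of its weighted Laplacian $L_w$. For any $S_0\subset V(G)$ with $S_0\cup b(S_0)=V(G)$, \[ \mathcal{N}\left[0,\ K_0(S_0)/2\right)\le|S_0|\quad\text{and}\quad\mathcal{N}\left[K_0(S_0)/2,\ \lambda_{N-1}\right]\ge N-|S_0|. \]
   Context: $G$ has vertex set $V(G)$ and symmetric weights $w\ge0$ with $w(u,u)=0$; $u\sim v$ iff $w(u,v)>0$; connected refers to this edge relation. $(L_wf)(v)=\sum_u(f(v)-f(u))w(v,u)$ on $\ell^2(G)$ (vertex weight $\nu\equiv1$). $\mathcal{N}I$ is the number of eigenvalues of $L_w$ in the interval $I$ counted with multiplicity. For $S\subset V(G)$: $cl(S)=S\cup\{v:\exists u\in S,\ u\sim v\}$ and $b(S)=cl(S)\setminus S$. $K_0(S_0)=\inf_{v\in b(S_0)}\sum_{u\in S_0}w(u,v)$. *)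

theory Defs
  imports "Jordan_Normal_Form.Char_Poly"
begin

definition adj :: "(nat \<Rightarrow> nat \<Rightarrow> real) \<Rightarrow> nat \<Rightarrow> nat \<Rightarrow> bool" where
  "adj w u v \<longleftrightarrow> w u v > 0"

definition weighted_graph :: "nat \<Rightarrow> (nat \<Rightarrow> nat \<Rightarrow> real) \<Rightarrow> bool" where
  "weighted_graph N w \<longleftrightarrow>
     (\<forall>u<N. \<forall>v<N. w u v \<ge> 0 \<and> w u v = w v u) \<and> (\<forall>u<N. w u u = 0)"

definition graph_connected :: "nat \<Rightarrow> (nat \<Rightarrow> nat \<Rightarrow> real) \<Rightarrow> bool" where
  "graph_connected N w \<longleftrightarrow>
     (\<forall>u<N. \<forall>v<N. (\<lambda>x y. x < N \<and> y < N \<and> adj w x y)\<^sup>*\<^sup>* u v)"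

text \<open>Weighted Laplacian (L_w f)(v) = sum_u (f v - f u) w(v,u), as an N x N matrix.\<close>
definition laplacian :: "nat \<Rightarrow> (nat \<Rightarrow> nat \<Rightarrow> real) \<Rightarrow> real mat" where
  "laplacian N w = mat N N (\<lambda>(i, j).
      (if i = j then (\<Sum>u<N. w i u) else 0) - w i j)"

definition eig_count :: "real mat \<Rightarrow> real set \<Rightarrow> nat" where
  "eig_count A I = (\<Sum>a \<in> {a. eigenvalue A a \<and> a \<in> I}. order a (char_poly A))"

definition largest_eigenvalue :: "real mat \<Rightarrow> real" where
  "largest_eigenvalue A = Max {a. eigenvalue A a}"

definition cl :: "nat \<Rightarrow> (nat \<Rightarrow> nat \<Rightarrow> real) \<Rightarrow> nat set \<Rightarrow> nat set" where
  "cl N w S = S \<union> {v. v < N \<and> (\<exists>u\<in>S. adj w u v)}"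

definition bdry :: "nat \<Rightarrow> (nat \<Rightarrow> nat \<Rightarrow> real) \<Rightarrow> nat set \<Rightarrow> nat set" where
  "bdry N w S = cl N w S - S"

definition K0 :: "nat \<Rightarrow> (nat \<Rightarrow> nat \<Rightarrow> real) \<Rightarrow> nat set \<Rightarrow> real" where
  "K0 N w S0 = (INF v \<in> bdry N w S0. \<Sum>u\<in>S0. w u v)"

end

theory Submission
  imports Defs
begin


lemma sym_real_eigen:
  fixes A :: "real mat"
  assumes A: "A \<in> carrier_mat n n" and sym: "\<And>i j. i<n \<Longrightarrow> j<n \<Longrightarrow> A$$(i,j) = A$$(j,i)" and n: "n > 0"
  shows "\<exists>l v. v \<in> carrier_vec n \<and> v \<noteq> 0\<^sub>v n \<and> A *\<^sub>v v = l \<cdot>\<^sub>v v"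
proof -
  let ?C = "map_mat complex_of_real A"
  have C: "?C \<in> carrier_mat n n" using A by auto
  obtain as where cp: "char_poly ?C = (\<Prod>a\<leftarrow>as. [:-a,1:])" and len: "length as = n"
    using char_poly_factorized[OF C] by blast
  obtain z zs where as: "as = z # zs" using len n by (cases as) auto
  have "poly (char_poly ?C) z = 0" unfolding cp as by simp
  hence "eigenvalue ?C z" using eigenvalue_root_char_poly[OF C] by simp
  then obtain x where ev: "eigenvector ?C x z" unfolding eigenvalue_def by blast
  hence x: "x \<in> carrier_vec n" "x \<noteq> 0\<^sub>v n" "?C *\<^sub>v x = z \<cdot>\<^sub>v x"
    unfolding eigenvector_def using C by auto
  have row: "(\<Sum>j<n. of_real (A$$(i,j)) * x$j) = z * x$i" if i: "i < n" for i
  proof -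
    have "(?C *\<^sub>v x) $ i = z * x $ i" using x(3) i x(1) by auto
    moreover have "(?C *\<^sub>v x) $ i = (\<Sum>j<n. of_real (A$$(i,j)) * x$j)"
      using i A x(1) by (auto simp: scalar_prod_def row_def lessThan_atLeast0)
    ultimately show ?thesis by simp
  qed
  define S where "S = (\<Sum>i<n. cnj (x$i) * (\<Sum>j<n. of_real (A$$(i,j)) * x$j))"
  define T where "T = (\<Sum>i<n. cnj (x$i) * x$i)"
  have ST: "S = z * T" unfolding S_def T_def using row by (simp add: sum_distrib_left mult_ac)
  have "cnj S = (\<Sum>i<n. \<Sum>j<n. x$i * (of_real (A$$(i,j)) * cnj (x$j)))"
    unfolding S_def by (simp add: sum_distrib_left)
  also have "\<dots> = (\<Sum>j<n. \<Sum>i<n. x$i * (of_real (A$$(i,j)) * cnj (x$j)))"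
    by (rule sum.swap)
  also have "\<dots> = S" unfolding S_def sum_distrib_left
    by (intro sum.cong refl, auto simp: sym mult_ac)
  finally have cS: "cnj S = S" .
  have T: "T = of_real (\<Sum>i<n. (cmod (x$i))\<^sup>2)"
    unfolding T_def of_real_sum by (intro sum.cong refl) (metis complex_norm_square mult.commute of_real_power)
  obtain i where i: "i < n" "x $ i \<noteq> 0" using x(1,2) by (metis eq_vecI carrier_vecD index_zero_vec)
  have "(cmod (x$i))\<^sup>2 > 0" using i by simp
  hence tpos: "(\<Sum>i<n. (cmod (x$i))\<^sup>2) > 0"
    by (metis (no_types, lifting) finite_lessThan i(1) lessThan_iff sum_pos2 zero_le_power2)
  have "Im S = 0" using cS by (metis cnj.sel(2) complex_cnj_cancel_iff equation_minus_iff neg_equal_zero)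
  hence "Im z * (\<Sum>i<n. (cmod (x$i))\<^sup>2) = 0" using ST T by simp
  hence Imz: "Im z = 0" using tpos by simp
  hence zr: "z = of_real (Re z)" by (simp add: complex_eqI)
  have "of_real (poly (char_poly A) (Re z)) = poly (char_poly ?C) z"
    using of_real_hom.char_poly_hom[OF A] zr by (metis of_real_hom.poly_map_poly)
  hence "poly (char_poly A) (Re z) = 0" using \<open>poly (char_poly ?C) z = 0\<close> by simp
  hence "eigenvalue A (Re z)" using eigenvalue_root_char_poly[OF A] by simp
  then obtain v where "eigenvector A v (Re z)" unfolding eigenvalue_def by blast
  thus ?thesis unfolding eigenvector_def using A by auto
qed



lemma householder:
  fixes v :: "real vec"
  assumes v: "v \<in> carrier_vec n" and n: "0 < n" and vv: "v \<bullet> v = 1" and v0: "v $ 0 \<le> 0"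
  shows "\<exists>H. H \<in> carrier_mat n n \<and> transpose_mat H = H \<and> H * H = 1\<^sub>m n \<and> H *\<^sub>v unit_vec n 0 = v"
proof -
  define u where "u j = v$j - (if j = 0 then 1 else 0)" for j
  define s where "s = (\<Sum>j<n. u j * u j)"
  have vv': "(\<Sum>j<n. v$j * v$j) = 1" using vv v by (simp add: scalar_prod_def lessThan_atLeast0)
  have "s = (\<Sum>j<n. v$j * v$j - 2 * (if j = 0 then v$j else 0) + (if j = 0 then 1 else 0))"
    unfolding s_def u_def by (intro sum.cong refl) (auto simp: algebra_simps)
  also have "\<dots> = 2 - 2 * v$0"
    using n by (simp add: sum.distrib sum_subtractf vv' sum_distrib_left[symmetric])
  finally have s: "s = 2 - 2 * v$0" .
  hence spos: "s > 0" using v0 by simp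
  define c where "c = 2 / s"
  have cs: "c * s = 2" using spos unfolding c_def by simp
  have cu0: "c * u 0 = -1" unfolding c_def u_def using spos s by (simp add: field_simps)
  define H where "H = mat n n (\<lambda>(i,j). (if i = j then 1 else 0) - c * u i * u j)"
  have H: "H \<in> carrier_mat n n" unfolding H_def by simp
  have HT: "transpose_mat H = H" unfolding H_def by (intro eq_matI) (auto simp: mult_ac)
  have HH: "H * H = 1\<^sub>m n"
  proof (intro eq_matI)
    fix i k assume i: "i < dim_row (1\<^sub>m n)" and k: "k < dim_col (1\<^sub>m n)"
    hence i: "i < n" and k: "k < n" by auto
    have "(H * H) $$ (i,k) = (\<Sum>j<n. ((if i = j then 1 else 0) - c*u i*u j) * ((if j = k then 1 else 0) - c*u j*u k))"
      using i k unfolding H_def by (simp add: scalar_prod_def lessThan_atLeast0 row_def col_def)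
    also have "\<dots> = (\<Sum>j<n. (if i = j then (if j = k then 1 else 0) - c * u j * u k else 0))
       - (\<Sum>j<n. if j = k then c*u i*u j else 0) + c*c*u i*u k * s"
      unfolding s_def sum_distrib_left sum_subtractf[symmetric] sum.distrib[symmetric]
      by (intro sum.cong refl) (auto simp: algebra_simps)
    also have "\<dots> = (if i = k then 1 else 0) - c * u i * u k - c*u i*u k + c*c*u i*u k * s"
      using i k by simp
    also have "\<dots> = (if i = k then 1 else 0)" using cs by (simp add: algebra_simps)
    finally show "(H * H) $$ (i,k) = 1\<^sub>m n $$ (i,k)" using i k by simp
  qed (use H in auto)
  have He: "H *\<^sub>v unit_vec n 0 = v"
  proof (intro eq_vecI)
    fix i assume "i < dim_vec v" hence i: "i < n" using v by simp
    have "(H *\<^sub>v unit_vec n 0) $ i = H $$ (i, 0)" using i n H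
      by (simp add: scalar_prod_right_unit row_def)
    also have "\<dots> = (if i = 0 then 1 else 0) - (c * u 0) * u i" unfolding H_def using i n by simp
    also have "\<dots> = v $ i" using cu0 unfolding u_def by simp
    finally show "(H *\<^sub>v unit_vec n 0) $ i = v $ i" .
  qed (use v H in auto)
  show ?thesis using H HT HH He by blast
qed

lemma orth_pres:
  fixes H :: "real mat"
  assumes H: "H \<in> carrier_mat n n" and HT: "transpose_mat H = H" and HH: "H * H = 1\<^sub>m n"
    and x: "x \<in> carrier_vec n" and y: "y \<in> carrier_vec n"
  shows "(H *\<^sub>v x) \<bullet> (H *\<^sub>v y) = x \<bullet> y"
proof -
  have "(H *\<^sub>v x) \<bullet> (H *\<^sub>v y) = (transpose_mat H *\<^sub>v (H *\<^sub>v x)) \<bullet> y"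
    using transpose_vec_mult_scalar[OF H y, of "H *\<^sub>v x"] H x by simp
  also have "transpose_mat H *\<^sub>v (H *\<^sub>v x) = x" unfolding HT
    using assoc_mult_mat_vec[OF H H x, symmetric] HH x by simp
  finally show ?thesis .
qed



lemma spectral:
  fixes A :: "real mat"
  assumes "A \<in> carrier_mat n n" "\<And>i j. i<n \<Longrightarrow> j<n \<Longrightarrow> A$$(i,j) = A$$(j,i)"
  shows "\<exists>d p. (\<forall>i<n. p i \<in> carrier_vec n \<and> A *\<^sub>v p i = d i \<cdot>\<^sub>v p i)
     \<and> (\<forall>i<n. \<forall>j<n. p i \<bullet> p j = (if i = j then 1 else 0))"
  using assms
proof (induction n arbitrary: A)
  case 0
  then show ?case by auto
next
  case (Suc m)
  define n where "n = Suc m"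
  have A: "A \<in> carrier_mat n n" and sym: "\<And>i j. i<n \<Longrightarrow> j<n \<Longrightarrow> A$$(i,j) = A$$(j,i)"
    using Suc.prems unfolding n_def by auto
  obtain l v0 where v0: "v0 \<in> carrier_vec n" "v0 \<noteq> 0\<^sub>v n" "A *\<^sub>v v0 = l \<cdot>\<^sub>v v0"
    using sym_real_eigen[OF A sym] unfolding n_def by blast
  have ss: "v0 \<bullet> v0 = (\<Sum>j<n. (v0$j)\<^sup>2)" using v0(1)
    by (simp add: scalar_prod_def lessThan_atLeast0 power2_eq_square)
  obtain i0 where i0: "i0 < n" "v0 $ i0 \<noteq> 0" using v0(1,2) by (metis eq_vecI carrier_vecD index_zero_vec)
  have "v0 \<bullet> v0 > 0" unfolding ss
    by (rule sum_pos2[of _ i0]) (use i0 in auto)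
  define k where "k = (if v0$0 \<le> 0 then 1 else -1) / sqrt (v0 \<bullet> v0)"
  define v where "v = k \<cdot>\<^sub>v v0"
  have v: "v \<in> carrier_vec n" unfolding v_def using v0 by simp
  have kk: "k * k * (v0 \<bullet> v0) = 1" unfolding k_def using \<open>v0 \<bullet> v0 > 0\<close>
    by (auto simp: field_simps)
  have vv: "v \<bullet> v = 1" unfolding v_def using v0(1) kk
    by (simp add: smult_scalar_prod_distrib scalar_prod_smult_distrib mult_ac)
  have vz: "v $ 0 \<le> 0" unfolding v_def k_def using v0(1) \<open>v0 \<bullet> v0 > 0\<close> n_def
    by (auto simp: divide_nonpos_pos mult_nonneg_nonpos2)
  have Av: "A *\<^sub>v v = l \<cdot>\<^sub>v v" unfolding v_def using A v0
    by (simp add: mult_mat_vec smult_smult_assoc mult.commute)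
  obtain H where H: "H \<in> carrier_mat n n" and HT: "transpose_mat H = H" and HH: "H * H = 1\<^sub>m n"
    and He: "H *\<^sub>v unit_vec n 0 = v"
    using householder[OF v _ vv vz] n_def by auto
  define e0 where "e0 = (unit_vec n 0 :: real vec)"
  have e0: "e0 \<in> carrier_vec n" unfolding e0_def by simp
  have Hv: "H *\<^sub>v v = e0" using He[symmetric] HH e0 unfolding e0_def
    by (metis H assoc_mult_mat_vec one_mult_mat_vec)
  define A' where "A' = H * A * H"
  have A': "A' \<in> carrier_mat n n" unfolding A'_def using H A by auto
  have AT: "transpose_mat A = A" using A sym by (intro eq_matI) auto
  have A'T: "transpose_mat A' = A'" unfolding A'_def
  proof -
    have "transpose_mat (H * A * H) = transpose_mat H * transpose_mat (H * A)"
      using transpose_mult[of "H * A" n n H n] H A by auto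
    also have "transpose_mat (H * A) = transpose_mat A * transpose_mat H"
      using transpose_mult[of H n n A n] H A by auto
    finally show "transpose_mat (H * A * H) = H * A * H" using HT AT by (simp add: assoc_mult_mat[OF H A H])
  qed
  have A'e: "A' *\<^sub>v e0 = l \<cdot>\<^sub>v e0"
  proof -
    have "A' *\<^sub>v e0 = H *\<^sub>v (A *\<^sub>v (H *\<^sub>v e0))" unfolding A'_def using H A e0
      by (simp add: assoc_mult_mat_vec[of _ n n _ n])
    also have "\<dots> = l \<cdot>\<^sub>v e0" using He Av Hv H v unfolding e0_def[symmetric]
      by (simp add: mult_mat_vec[of _ n n])
    finally show ?thesis .
  qed
  have A'col: "A'$$(i,0) = (if i = 0 then l else 0)" if i: "i < n" for i
  proof -
    have "(A' *\<^sub>v e0) $ i = A'$$(i,0)" using i A' unfolding e0_def n_def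
      by (simp add: scalar_prod_right_unit row_def)
    thus ?thesis using A'e i e0 unfolding e0_def by auto
  qed
  have A'row: "A'$$(0,j) = (if j = 0 then l else 0)" if j: "j < n" for j
  proof -
    have "A'$$(0,j) = transpose_mat A' $$ (j,0)" using j A' n_def by auto
    thus ?thesis using A'T A'col j by simp
  qed
  have A'sym: "A'$$(i,j) = A'$$(j,i)" if "i<n" "j<n" for i j
    using that A' A'T by (metis carrier_matD index_transpose_mat(1))
  define A3 where "A3 = mat m m (\<lambda>(i,j). A'$$(Suc i, Suc j))"
  have A3: "A3 \<in> carrier_mat m m" unfolding A3_def by simp
  have A3sym: "\<And>i j. i<m \<Longrightarrow> j<m \<Longrightarrow> A3$$(i,j) = A3$$(j,i)"
    unfolding A3_def using A'sym n_def by auto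
  obtain d' q where dq: "\<forall>i<m. q i \<in> carrier_vec m \<and> A3 *\<^sub>v q i = d' i \<cdot>\<^sub>v q i"
     and qq: "\<forall>i<m. \<forall>j<m. q i \<bullet> q j = (if i = j then 1 else 0)"
    using Suc.IH[OF A3 A3sym] by blast
  define qt where "qt i = vec n (\<lambda>k. if k = 0 then 0 else q i $ (k - 1))" for i
  define b where "b i = (if i = 0 then e0 else qt (i - 1))" for i
  define d where "d i = (if i = 0 then l else d' (i - 1))" for i
  have b: "b i \<in> carrier_vec n" for i unfolding b_def qt_def using e0 by auto
  have A'qt: "A' *\<^sub>v qt i = d' i \<cdot>\<^sub>v qt i" if i: "i < m" for i
  proof (intro eq_vecI)
    fix k assume "k < dim_vec (d' i \<cdot>\<^sub>v qt i)"
    hence k: "k < n" unfolding qt_def by simp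
    have "(A' *\<^sub>v qt i) $ k = (\<Sum>t<n. A'$$(k,t) * qt i $ t)" using k A'
      by (simp add: scalar_prod_def lessThan_atLeast0 qt_def row_def)
    also have "\<dots> = (\<Sum>t<m. A'$$(k,Suc t) * q i $ t)"
      unfolding n_def sum.lessThan_Suc_shift by (simp add: qt_def n_def)
    also have "\<dots> = (d' i \<cdot>\<^sub>v qt i) $ k"
    proof (cases k)
      case 0
      then show ?thesis using A'row n_def by (simp add: qt_def)
    next
      case (Suc k')
      hence k': "k' < m" using k n_def by simp
      have "(A3 *\<^sub>v q i) $ k' = (\<Sum>t<m. A'$$(k,Suc t) * q i $ t)"
      proof -
        have qi: "dim_vec (q i) = m" using dq i by auto
        show ?thesis using k' qi Suc unfolding A3_def
          by (simp add: scalar_prod_def lessThan_atLeast0 row_def)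
      qed
      moreover have "dim_vec (q i) = m" using dq i by auto
      moreover have "A3 *\<^sub>v q i = d' i \<cdot>\<^sub>v q i" using dq i by auto
      ultimately show ?thesis using i k' Suc k by (simp add: qt_def)
    qed
    finally show "(A' *\<^sub>v qt i) $ k = (d' i \<cdot>\<^sub>v qt i) $ k" .
  qed (use A' in \<open>simp add: qt_def\<close>)
  have A'b: "A' *\<^sub>v b i = d i \<cdot>\<^sub>v b i" if i: "i < n" for i
    using A'e A'qt[of "i - 1"] i n_def unfolding b_def d_def by auto
  have qtq: "qt i \<bullet> qt j = q i \<bullet> q j" if "i < m" "j < m" for i j
  proof -
    have "qt i \<bullet> qt j = (\<Sum>t<n. qt i $ t * qt j $ t)"
      by (simp add: scalar_prod_def lessThan_atLeast0 qt_def)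
    also have "\<dots> = (\<Sum>t<m. q i $ t * q j $ t)"
      unfolding n_def sum.lessThan_Suc_shift by (simp add: qt_def n_def)
    also have "\<dots> = q i \<bullet> q j"
    proof -
      have "dim_vec (q j) = m" using dq that by auto
      thus ?thesis by (simp add: scalar_prod_def lessThan_atLeast0)
    qed
    finally show ?thesis .
  qed
  have e0qt: "e0 \<bullet> qt i = 0" for i
    unfolding e0_def qt_def n_def by (simp add: scalar_prod_left_unit)
  have bb: "b i \<bullet> b j = (if i = j then 1 else 0)" if "i < n" "j < n" for i j
  proof -
    have ee: "e0 \<bullet> e0 = 1" unfolding e0_def n_def by simp
    have qte: "qt i \<bullet> e0 = 0" for i using e0qt[of i] comm_scalar_prod[of e0 n "qt i"] e0
      by (simp add: qt_def)
    show ?thesis using that qtq qq ee e0qt qte unfolding b_def n_def by auto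
  qed
  have HA': "H * A' = A * H" unfolding A'_def
    using H A HH by (metis assoc_mult_mat left_mult_one_mat mult_carrier_mat)
  define p where "p i = H *\<^sub>v b i" for i
  have "\<forall>i<n. p i \<in> carrier_vec n \<and> A *\<^sub>v p i = d i \<cdot>\<^sub>v p i"
  proof (intro allI impI conjI)
    fix i assume i: "i < n"
    show "p i \<in> carrier_vec n" unfolding p_def using H b by auto
    have "A *\<^sub>v p i = (A * H) *\<^sub>v b i" unfolding p_def using A H b by (simp add: assoc_mult_mat_vec)
    also have "\<dots> = H *\<^sub>v (A' *\<^sub>v b i)" unfolding HA'[symmetric] using A' H b by (simp add: assoc_mult_mat_vec)
    also have "\<dots> = d i \<cdot>\<^sub>v p i" unfolding p_def A'b[OF i] using H b by (simp add: mult_mat_vec)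
    finally show "A *\<^sub>v p i = d i \<cdot>\<^sub>v p i" .
  qed
  moreover have "\<forall>i<n. \<forall>j<n. p i \<bullet> p j = (if i = j then 1 else 0)"
    unfolding p_def using orth_pres[OF H HT HH b b] bb by simp
  ultimately show ?case unfolding n_def by blast
qed



lemma prod_list_upt: "prod_list (map f [0..<n]) = (\<Prod>i<n. f i)"
  by (induction n) auto

lemma char_poly_spectral:
  fixes A :: "real mat"
  assumes A: "A \<in> carrier_mat n n"
    and ev: "\<forall>i<n. p i \<in> carrier_vec n \<and> A *\<^sub>v p i = d i \<cdot>\<^sub>v p i"
    and orth: "\<forall>i<n. \<forall>j<n. p i \<bullet> p j = (if i = j then 1 else 0)"
  shows "char_poly A = (\<Prod>i<n. [:-d i, 1:])"
proof -
  define P where "P = mat n n (\<lambda>(i,j). p j $ i)"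
  define Q where "Q = transpose_mat P"
  define D where "D = mat n n (\<lambda>(i,j). if i = j then d i else (0::real))"
  have P: "P \<in> carrier_mat n n" and Q: "Q \<in> carrier_mat n n" and D: "D \<in> carrier_mat n n"
    unfolding P_def Q_def D_def by auto
  have colP: "col P j = p j" if "j < n" for j
    using that ev unfolding P_def by (auto simp: col_mat intro!: eq_vecI)
  have QP: "Q * P = 1\<^sub>m n"
  proof (intro eq_matI)
    fix i j assume "i < dim_row (1\<^sub>m n)" "j < dim_col (1\<^sub>m n)"
    hence ij: "i < n" "j < n" by auto
    have "(Q * P) $$ (i,j) = p i \<bullet> p j" using ij colP[of i] colP[of j] P
      unfolding Q_def by (simp add: row_transpose)
    thus "(Q * P) $$ (i,j) = 1\<^sub>m n $$ (i,j)" using orth ij by simp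
  qed (use P Q in auto)
  have PQ: "P * Q = 1\<^sub>m n" using mat_mult_left_right_inverse[OF Q P QP] .
  have AP: "A * P = P * D"
  proof (intro eq_matI)
    fix i j assume "i < dim_row (P * D)" "j < dim_col (P * D)"
    hence ij: "i < n" "j < n" using P D by auto
    have "(A * P) $$ (i,j) = (A *\<^sub>v p j) $ i" using ij A P colP[of j] by simp
    also have "\<dots> = d j * p j $ i" using ev ij by auto
    also have "\<dots> = (P * D) $$ (i,j)"
    proof -
      have "(P * D) $$ (i,j) = (\<Sum>k = 0..<n. p k $ i * (if k = j then d k else 0))"
        using ij unfolding P_def D_def by (auto simp: scalar_prod_def intro!: sum.cong)
      also have "\<dots> = (\<Sum>k = 0..<n. (if k = j then p j $ i * d j else 0))"
        by (intro sum.cong) auto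
      finally show ?thesis using ij by (simp add: mult.commute)
    qed
    finally show "(A * P) $$ (i,j) = (P * D) $$ (i,j)" .
  qed (use A P D in auto)
  have "A = A * (P * Q)" using A PQ by simp
  also have "\<dots> = P * D * Q" using A P Q D AP by (metis assoc_mult_mat)
  finally have "similar_mat_wit A D P Q" unfolding similar_mat_wit_def Let_def
    using A P Q D PQ QP by auto
  hence "similar_mat A D" unfolding similar_mat_def by blast
  hence "char_poly A = char_poly D" by (rule char_poly_similar)
  also have "\<dots> = (\<Prod>a\<leftarrow>diag_mat D. [:- a, 1:])"
    by (rule char_poly_upper_triangular[OF D]) (auto simp: upper_triangular_def D_def)
  also have "diag_mat D = map d [0..<n]" unfolding diag_mat_def D_def by auto
  finally show ?thesis by (simp add: prod_list_upt[of "\<lambda>i. [:- d i, 1:]", symmetric] comp_def)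
qed

lemma order_prod_lin:
  fixes d :: "nat \<Rightarrow> real"
  assumes "finite I"
  shows "order a (\<Prod>i\<in>I. [:-d i, 1:]) = card {i\<in>I. d i = a}"
  using assms
proof (induction I rule: finite_induct)
  case empty
  then show ?case by (simp add: order_0I)
next
  case (insert x F)
  have nz: "(\<Prod>i\<in>F. [:-d i, 1:]) \<noteq> 0" using insert by (simp add: prod_zero_iff)
  have "order a (\<Prod>i\<in>insert x F. [:-d i, 1:]) = order a [:-d x, 1:] + order a (\<Prod>i\<in>F. [:-d i, 1:])"
  proof -
    have "(\<Prod>i\<in>insert x F. [:-d i, 1:]) = [:-d x, 1:] * (\<Prod>i\<in>F. [:-d i, 1:])"
      by (rule prod.insert) (use insert in auto)
    moreover have "[:-d x, 1:] * (\<Prod>i\<in>F. [:-d i, 1:]) \<noteq> 0" using nz by (simp del: mult_pCons_left)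
    ultimately show ?thesis using order_mult by metis
  qed
  also have "\<dots> = (if d x = a then 1 else 0) + card {i\<in>F. d i = a}"
    using insert by (simp add: order_linear')
  also have "\<dots> = card {i\<in>insert x F. d i = a}"
  proof -
    have "{i\<in>insert x F. d i = a} = (if d x = a then insert x {i\<in>F. d i = a} else {i\<in>F. d i = a})"
      by auto
    thus ?thesis using insert by auto
  qed
  finally show ?case .
qed

lemma eig_count_diag:
  fixes A :: "real mat"
  assumes A: "A \<in> carrier_mat n n" and cp: "char_poly A = (\<Prod>i<n. [:-d i, 1:])"
  shows "eig_count A I = card {i. i < n \<and> d i \<in> I}"
    and "{a. eigenvalue A a} = d ` {..<n}"
proof -
  have evs: "eigenvalue A a \<longleftrightarrow> (\<exists>i<n. d i = a)" for a
    unfolding eigenvalue_root_char_poly[OF A] cp poly_prod by (auto simp: prod_zero_iff)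
  thus "{a. eigenvalue A a} = d ` {..<n}" by auto
  have X: "{a. eigenvalue A a \<and> a \<in> I} = d ` {i. i < n \<and> d i \<in> I}" using evs by auto
  have "{i. i < n \<and> d i \<in> I} = (\<Union>a\<in>{a. eigenvalue A a \<and> a \<in> I}. {i. i < n \<and> d i = a})"
    using evs by auto
  moreover have "finite {a. eigenvalue A a \<and> a \<in> I}" unfolding X by simp
  ultimately have "card {i. i < n \<and> d i \<in> I} = (\<Sum>a\<in>{a. eigenvalue A a \<and> a \<in> I}. card {i. i < n \<and> d i = a})"
    by (simp only:) (rule card_UN_disjoint, auto)
  also have "\<dots> = eig_count A I" unfolding eig_count_def cp
  proof (intro sum.cong refl)
    fix a
    have "{i\<in>{..<n}. d i = a} = {i. i<n \<and> d i = a}" by auto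
    thus "card {i. i < n \<and> d i = a} = order a (\<Prod>i<n. [:- d i, 1:])"
      using order_prod_lin[of "{..<n}" a d] by simp
  qed
  finally show "eig_count A I = card {i. i < n \<and> d i \<in> I}" by simp
qed



lemma lin_sys:
  fixes a :: "nat \<Rightarrow> nat \<Rightarrow> real"
  assumes "finite E" "finite J" "card E < card J"
  shows "\<exists>x. (\<exists>j\<in>J. x j \<noteq> 0) \<and> (\<forall>e\<in>E. (\<Sum>j\<in>J. a e j * x j) = 0)"
  using assms
proof (induction E arbitrary: J a rule: finite_induct)
  case empty
  then obtain j where "j \<in> J" by (metis card.empty equals0I less_irrefl)
  then show ?case by (intro exI[of _ "\<lambda>_. 1"]) auto
next
  case (insert e E)
  show ?case
  proof (cases "\<forall>j\<in>J. a e j = 0")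
    case True
    have "card E < card J" using insert by simp
    then obtain x where x: "\<exists>j\<in>J. x j \<noteq> 0" "\<forall>e\<in>E. (\<Sum>j\<in>J. a e j * x j) = 0"
      using insert.IH[OF insert.prems(1)] by blast
    thus ?thesis using True by (intro exI[of _ x]) auto
  next
    case False
    then obtain j0 where j0: "j0 \<in> J" "a e j0 \<noteq> 0" by blast
    define J' where "J' = J - {j0}"
    have fJ': "finite J'" unfolding J'_def using insert by simp
    have cJ': "card E < card J'" unfolding J'_def using insert j0 by simp
    define b where "b e' j = a e' j - a e' j0 * a e j / a e j0" for e' j
    obtain y where y: "\<exists>j\<in>J'. y j \<noteq> 0" "\<forall>e'\<in>E. (\<Sum>j\<in>J'. b e' j * y j) = 0"
      using insert.IH[OF fJ' cJ', of b] by blast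
    define s where "s = (\<Sum>j\<in>J'. a e j * y j)"
    define x where "x = y(j0 := - s / a e j0)"
    have split: "(\<Sum>j\<in>J. g j * x j) = g j0 * x j0 + (\<Sum>j\<in>J'. g j * y j)" for g
    proof -
      have "(\<Sum>j\<in>J. g j * x j) = g j0 * x j0 + (\<Sum>j\<in>J'. g j * x j)"
        unfolding J'_def using j0 insert by (simp add: sum.remove)
      also have "(\<Sum>j\<in>J'. g j * x j) = (\<Sum>j\<in>J'. g j * y j)"
        unfolding x_def J'_def by (intro sum.cong) auto
      finally show ?thesis .
    qed
    have "\<exists>j\<in>J. x j \<noteq> 0" using y(1) unfolding x_def J'_def by auto
    moreover have "(\<Sum>j\<in>J. a e j * x j) = 0"
      unfolding split using j0 unfolding x_def s_def by simp
    moreover have "(\<Sum>j\<in>J. a e' j * x j) = 0" if e': "e' \<in> E" for e'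
    proof -
      have "0 = (\<Sum>j\<in>J'. b e' j * y j)" using y(2) e' by simp
      also have "\<dots> = (\<Sum>j\<in>J'. a e' j * y j) - a e' j0 / a e j0 * s"
        unfolding b_def s_def sum_distrib_left sum_subtractf[symmetric]
        by (intro sum.cong refl) (simp add: algebra_simps)
      finally have h: "(\<Sum>j\<in>J'. a e' j * y j) = a e' j0 / a e j0 * s" by simp
      show ?thesis unfolding split using h by (simp add: x_def)
    qed
    ultimately show ?thesis by blast
  qed
qed



theorem corollary3p4:
  fixes N :: nat and w :: "nat \<Rightarrow> nat \<Rightarrow> real" and S0 :: "nat set"
  assumes "0 < N"
    and "weighted_graph N w"
    and "graph_connected N w"
    and "S0 \<subseteq> {..<N}"
    and "S0 \<union> bdry N w S0 = {..<N}"
  shows "eig_count (laplacian N w) {0..<K0 N w S0 / 2} \<le> card S0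
    \<and> eig_count (laplacian N w) {K0 N w S0 / 2 .. largest_eigenvalue (laplacian N w)}
        \<ge> N - card S0"
proof -
  define L where "L = laplacian N w"
  have L: "L \<in> carrier_mat N N" by (simp add: L_def laplacian_def)
  have Lij: "L$$(i,j) = (if i = j then (\<Sum>u<N. w i u) else 0) - w i j" if "i<N" "j<N" for i j
    using that by (simp add: L_def laplacian_def)
  have wsym: "w u v = w v u" if "u<N" "v<N" for u v
    using assms(2) that unfolding weighted_graph_def by auto
  have wnn: "w u v \<ge> 0" if "u<N" "v<N" for u v
    using assms(2) that unfolding weighted_graph_def by auto
  have Lsym: "L$$(i,j) = L$$(j,i)" if "i<N" "j<N" for i j
    using that Lij wsym by auto
  obtain d p where ev: "\<forall>i<N. p i \<in> carrier_vec N \<and> L *\<^sub>v p i = d i \<cdot>\<^sub>v p i"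
    and orth: "\<forall>i<N. \<forall>j<N. p i \<bullet> p j = (if i = j then 1 else 0)"
    using spectral[OF L Lsym] by blast
  have cp: "char_poly L = (\<Prod>i<N. [:-d i, 1:])" by (rule char_poly_spectral[OF L ev orth])
  note ec = eig_count_diag[OF L cp]
  define c where "c = K0 N w S0 / 2"
  define m where "m = card S0"
  have orth': "(\<Sum>u<N. p i $ u * p j $ u) = (if i = j then 1 else 0)" if "i<N" "j<N" for i j
  proof -
    have "dim_vec (p j) = N" using ev that by auto
    thus ?thesis using orth that unfolding scalar_prod_def lessThan_atLeast0 by metis
  qed
  have Lp: "(\<Sum>v<N. L$$(u,v) * p j $ v) = d j * p j $ u" if "u<N" "j<N" for u j
  proof -
    have "(L *\<^sub>v p j) $ u = (\<Sum>v<N. L$$(u,v) * p j $ v)"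
    proof -
      have "dim_vec (p j) = N" using ev that by auto
      thus ?thesis using that L by (auto simp: scalar_prod_def lessThan_atLeast0 row_def)
    qed
    thus ?thesis using ev that by auto
  qed
  define B where "B = {..<N} - S0"
  have bd: "bdry N w S0 = B" using assms(5) unfolding B_def bdry_def by auto
  have K0le: "K0 N w S0 \<le> (\<Sum>u\<in>S0. w u v)" if "v \<in> B" for v
    unfolding K0_def bd using that
    by (intro cINF_lower bdd_below_finite) (auto simp: B_def)
  have fS0: "finite S0" using assms(4) finite_subset by blast
  have qf: "(\<Sum>u<N. f u * (\<Sum>v<N. L$$(u,v) * f v)) \<ge> c * (\<Sum>u<N. (f u)\<^sup>2)"
    if f0: "\<And>s. s \<in> S0 \<Longrightarrow> f s = 0" for f
  proof -
    have r1: "(\<Sum>v<N. L$$(u,v) * f v) = (\<Sum>v<N. w u v * (f u - f v))" if u: "u<N" for u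
    proof -
      have "(\<Sum>v<N. L$$(u,v) * f v) = (\<Sum>v<N. (if u = v then (\<Sum>t<N. w u t) * f v else 0) - w u v * f v)"
        by (intro sum.cong refl) (auto simp: Lij u algebra_simps)
      also have "\<dots> = (\<Sum>t<N. w u t) * f u - (\<Sum>v<N. w u v * f v)"
        using u by (simp add: sum_subtractf)
      also have "\<dots> = (\<Sum>v<N. w u v * (f u - f v))"
        by (simp add: sum_distrib_right sum_distrib_left sum_subtractf algebra_simps)
      finally show ?thesis .
    qed
    define R1 where "R1 = (\<Sum>u<N. \<Sum>v<N. w u v * f u * (f u - f v))"
    have Q1: "(\<Sum>u<N. f u * (\<Sum>v<N. L$$(u,v) * f v)) = R1"
      unfolding R1_def
    proof (intro sum.cong refl)
      fix u assume "u \<in> {..<N}"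
      hence "f u * (\<Sum>v<N. L$$(u,v) * f v) = f u * (\<Sum>v<N. w u v * (f u - f v))" using r1 by simp
      also have "\<dots> = (\<Sum>v<N. w u v * f u * (f u - f v))" by (simp add: sum_distrib_left mult_ac)
      finally show "f u * (\<Sum>v<N. L$$(u,v) * f v) = (\<Sum>v<N. w u v * f u * (f u - f v))" .
    qed
    have R12: "R1 = (\<Sum>u<N. \<Sum>v<N. w u v * f v * (f v - f u))"
    proof -
      have "R1 = (\<Sum>v<N. \<Sum>u<N. w u v * f u * (f u - f v))" unfolding R1_def by (rule sum.swap)
      also have "\<dots> = (\<Sum>u<N. \<Sum>v<N. w u v * f v * (f v - f u))"
        by (intro sum.cong refl) (simp add: wsym)
      finally show ?thesis .
    qed
    have "2 * R1 = (\<Sum>u<N. \<Sum>v<N. w u v * (f u - f v)\<^sup>2)"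
      unfolding mult_2 
      apply (subst (2) R12) unfolding R1_def sum.distrib[symmetric]
      by (intro sum.cong refl) (simp add: power2_eq_square algebra_simps)
    also have "\<dots> \<ge> (\<Sum>u\<in>S0. \<Sum>v<N. w u v * (f u - f v)\<^sup>2)"
      by (rule sum_mono2) (use assms(4) wnn in \<open>auto intro!: sum_nonneg\<close>)
    moreover have "(\<Sum>u\<in>S0. \<Sum>v<N. w u v * (f u - f v)\<^sup>2) \<ge> (\<Sum>u\<in>S0. \<Sum>v\<in>B. w u v * (f v)\<^sup>2)"
    proof (rule sum_mono)
      fix u assume u: "u \<in> S0"
      have "(\<Sum>v\<in>B. w u v * (f v)\<^sup>2) = (\<Sum>v\<in>B. w u v * (f u - f v)\<^sup>2)"
        using f0[OF u] by simp
      also have "\<dots> \<le> (\<Sum>v<N. w u v * (f u - f v)\<^sup>2)"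
        by (rule sum_mono2) (use u assms(4) wnn in \<open>auto simp: B_def\<close>)
      finally show "(\<Sum>v\<in>B. w u v * (f v)\<^sup>2) \<le> (\<Sum>v<N. w u v * (f u - f v)\<^sup>2)" .
    qed
    moreover have "(\<Sum>u\<in>S0. \<Sum>v\<in>B. w u v * (f v)\<^sup>2) = (\<Sum>v\<in>B. (f v)\<^sup>2 * (\<Sum>u\<in>S0. w u v))"
      by (subst sum.swap) (simp add: sum_distrib_left sum_distrib_right mult_ac)
    moreover have "(\<Sum>v\<in>B. (f v)\<^sup>2 * (\<Sum>u\<in>S0. w u v)) \<ge> (\<Sum>v\<in>B. (f v)\<^sup>2 * K0 N w S0)"
      by (rule sum_mono) (simp add: K0le mult_left_mono)
    moreover have "(\<Sum>v\<in>B. (f v)\<^sup>2 * K0 N w S0) = K0 N w S0 * (\<Sum>u<N. (f u)\<^sup>2)"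
    proof -
      have "(\<Sum>u<N. (f u)\<^sup>2) = (\<Sum>u\<in>B. (f u)\<^sup>2) + (\<Sum>u\<in>S0. (f u)\<^sup>2)"
        unfolding B_def using assms(4) by (simp add: sum.subset_diff[of S0 "{..<N}"])
      also have "(\<Sum>u\<in>S0. (f u)\<^sup>2) = 0" using f0 by simp
      finally show ?thesis by (simp add: sum_distrib_left mult_ac)
    qed
    ultimately have "2 * R1 \<ge> K0 N w S0 * (\<Sum>u<N. (f u)\<^sup>2)" by linarith
    thus ?thesis unfolding Q1 c_def by simp
  qed
  define J where "J = {i. i < N \<and> d i < c}"
  have key: "card J \<le> m"
  proof (rule ccontr)
    assume "\<not> card J \<le> m"
    hence lt: "card S0 < card J" unfolding m_def by simp
    have fJ: "finite J" unfolding J_def by simp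
    have JN: "\<And>j. j \<in> J \<Longrightarrow> j < N" unfolding J_def by simp
    obtain al where al: "\<exists>j\<in>J. al j \<noteq> 0" "\<forall>s\<in>S0. (\<Sum>j\<in>J. p j $ s * al j) = 0"
      using lin_sys[OF fS0 fJ lt, of "\<lambda>s j. p j $ s"] by blast
    have bil: "(\<Sum>u<N. (\<Sum>i\<in>J. al i * p i $ u) * (\<Sum>j\<in>J. be j * p j $ u)) = (\<Sum>i\<in>J. al i * be i)" for be
    proof -
      have "(\<Sum>u<N. (\<Sum>i\<in>J. al i * p i $ u) * (\<Sum>j\<in>J. be j * p j $ u))
          = (\<Sum>u<N. \<Sum>i\<in>J. \<Sum>j\<in>J. al i * be j * (p i $ u * p j $ u))"
        by (intro sum.cong refl) (simp add: sum_product mult_ac)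
      also have "\<dots> = (\<Sum>i\<in>J. \<Sum>u<N. \<Sum>j\<in>J. al i * be j * (p i $ u * p j $ u))" by (rule sum.swap)
      also have "\<dots> = (\<Sum>i\<in>J. \<Sum>j\<in>J. al i * be j * (\<Sum>u<N. p i $ u * p j $ u))"
      proof (rule sum.cong[OF refl])
        fix i
        show "(\<Sum>u<N. \<Sum>j\<in>J. al i * be j * (p i $ u * p j $ u)) = (\<Sum>j\<in>J. al i * be j * (\<Sum>u<N. p i $ u * p j $ u))"
          by (subst sum.swap) (simp add: sum_distrib_left)
      qed
      also have "\<dots> = (\<Sum>i\<in>J. \<Sum>j\<in>J. if i = j then al i * be i else 0)"
        by (intro sum.cong refl) (simp add: orth' JN)
      also have "\<dots> = (\<Sum>i\<in>J. al i * be i)" using fJ by simp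
      finally show ?thesis .
    qed
    define f where "f u = (\<Sum>j\<in>J. al j * p j $ u)" for u
    have f0: "f s = 0" if "s \<in> S0" for s
      using al(2) that unfolding f_def by (simp add: mult.commute)
    have Lf: "(\<Sum>v<N. L$$(u,v) * f v) = (\<Sum>j\<in>J. (al j * d j) * p j $ u)" if u: "u < N" for u
    proof -
      have "(\<Sum>v<N. L$$(u,v) * f v) = (\<Sum>j\<in>J. al j * (\<Sum>v<N. L$$(u,v) * p j $ v))"
        unfolding f_def sum_distrib_left by (subst sum.swap) (simp add: mult_ac)
      also have "\<dots> = (\<Sum>j\<in>J. (al j * d j) * p j $ u)"
        by (intro sum.cong refl) (simp add: Lp u JN)
      finally show ?thesis .
    qed
    have Qf: "(\<Sum>u<N. f u * (\<Sum>v<N. L$$(u,v) * f v)) = (\<Sum>i\<in>J. al i * (al i * d i))"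
    proof -
      have "(\<Sum>u<N. f u * (\<Sum>v<N. L$$(u,v) * f v)) = (\<Sum>u<N. f u * (\<Sum>j\<in>J. (al j * d j) * p j $ u))"
        by (intro sum.cong refl) (simp add: Lf)
      also have "\<dots> = (\<Sum>i\<in>J. al i * (al i * d i))"
        using bil[of "\<lambda>j. al j * d j"] unfolding f_def by simp
      finally show ?thesis .
    qed
    have nf: "(\<Sum>u<N. (f u)\<^sup>2) = (\<Sum>i\<in>J. al i * al i)"
      using bil[of al] unfolding f_def[symmetric] by (simp add: power2_eq_square)
    have "(\<Sum>i\<in>J. al i * (al i * d i)) < (\<Sum>i\<in>J. c * (al i * al i))"
    proof (rule sum_strict_mono_ex1[OF fJ])
      show "\<forall>i\<in>J. al i * (al i * d i) \<le> c * (al i * al i)"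
      proof
        fix i assume "i \<in> J"
        hence "d i < c" unfolding J_def by simp
        moreover have "al i * al i \<ge> 0" by simp
        ultimately show "al i * (al i * d i) \<le> c * (al i * al i)"
          by (metis mult.assoc mult.commute mult_left_mono less_imp_le)
      qed
      from al(1) obtain j where j: "j \<in> J" "al j \<noteq> 0" by blast
      hence "d j < c" unfolding J_def by simp
      moreover have "al j * al j > 0" using j(2) not_real_square_gt_zero by blast
      ultimately have "al j * (al j * d j) < c * (al j * al j)"
        by (metis mult.assoc mult.commute mult_strict_left_mono)
      thus "\<exists>i\<in>J. al i * (al i * d i) < c * (al i * al i)" using j by blast
    qed
    hence "(\<Sum>u<N. f u * (\<Sum>v<N. L$$(u,v) * f v)) < c * (\<Sum>u<N. (f u)\<^sup>2)"
      unfolding Qf nf by (simp add: sum_distrib_left)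
    with qf[of f, OF f0] show False by linarith
  qed
  have ev_set: "{a. eigenvalue L a} = d ` {..<N}" using ec(2) .
  have lg: "largest_eigenvalue L = Max (d ` {..<N})" unfolding largest_eigenvalue_def ev_set ..
  have dle: "d i \<le> largest_eigenvalue L" if "i < N" for i
    unfolding lg using that by (intro Max_ge) auto
  have c1: "eig_count L {0..<c} \<le> card S0"
  proof -
    have "eig_count L {0..<c} = card {i. i < N \<and> d i \<in> {0..<c}}" by (rule ec(1))
    also have "\<dots> \<le> card J" unfolding J_def by (intro card_mono) auto
    finally show ?thesis using key m_def by simp
  qed
  have c2: "eig_count L {c..largest_eigenvalue L} \<ge> N - card S0"
  proof -
    have eq: "{i. i < N \<and> d i \<in> {c..largest_eigenvalue L}} = {..<N} - J"
      unfolding J_def using dle by auto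
    have "card ({..<N} - J) = N - card J" by (subst card_Diff_subset) (auto simp: J_def)
    hence "eig_count L {c..largest_eigenvalue L} = N - card J" using ec(1) eq by simp
    thus ?thesis using key m_def by simp
  qed
  show ?thesis using c1 c2 unfolding L_def c_def by simp
qed

end
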